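(* Let $S$ be a semidomain. The following are equivalent: (a) $S$ satisfies ACCP; (b) $S[x]$ satisfies ACCP; (c) $S[x^{\pm1}]$ satisfies ACCP.
   Context: A semidomain is a subset $S$ of an integral domain $R$ containing $0$ and $1$ and closed under addition and multiplication. $S^*=S\setminus\{0\}$ is a monoid under multiplication. $S$ satisfies ACCP if every ascending chain of principal ideals $b_1S^*\subseteq b_2S^*\subseteq\cdots$ ($b_i\in S^*$) of the monoid $S^*$ eventually stabilizes. $S[x]$ (resp. $S[x^{\pm1}]$) is the semidomain of polynomials (resp. Laurent polynomials) in $R[x]$ (resp. $R[x^{\pm1}]$) with coefficients in $S$. *)

theory Defs
  imports "HOL-Computational_Algebra.Polynomial" "HOL-Computational_Algebra.Formal_Laurent_Series"
begin

definition semidomain :: "'a::idom set \<Rightarrow> bool" where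
  "semidomain S \<longleftrightarrow> 0 \<in> S \<and> 1 \<in> S \<and> (\<forall>a\<in>S. \<forall>b\<in>S. a + b \<in> S \<and> a * b \<in> S)"

definition pideal :: "'a::idom set \<Rightarrow> 'a \<Rightarrow> 'a set" where
  "pideal S b = {b * s | s. s \<in> S - {0}}"

definition ACCP :: "'a::idom set \<Rightarrow> bool" where
  "ACCP S \<longleftrightarrow> (\<forall>b :: nat \<Rightarrow> 'a. (\<forall>i. b i \<in> S - {0}) \<and> (\<forall>i. pideal S (b i) \<subseteq> pideal S (b (Suc i)))
      \<longrightarrow> (\<exists>N. \<forall>n\<ge>N. pideal S (b n) = pideal S (b N)))"

definition poly_semidomain :: "'a::idom set \<Rightarrow> 'a poly set" where
  "poly_semidomain S = {p. \<forall>n. coeff p n \<in> S}"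

definition laurent_semidomain :: "'a::idom set \<Rightarrow> 'a fls set" where
  "laurent_semidomain S = {f. finite {n. fls_nth f n \<noteq> 0} \<and> (\<forall>n. fls_nth f n \<in> S)}"

end

theory Submission
  imports Defs "HOL-Computational_Algebra.Polynomial_FPS"
begin

definition mclosed :: "'a::idom set \<Rightarrow> bool" where
  "mclosed T \<longleftrightarrow> 1 \<in> T \<and> (\<forall>a\<in>T. \<forall>b\<in>T. a * b \<in> T)"

lemma pideal_mem: "x \<in> pideal T b \<longleftrightarrow> (\<exists>s. x = b * s \<and> s \<in> T \<and> s \<noteq> 0)"
  by (auto simp: pideal_def)

lemma pideal_self: "1 \<in> T \<Longrightarrow> b \<in> pideal T b"
  by (auto simp: pideal_mem intro!: exI[of _ 1])

lemma pideal_trans: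
  assumes "mclosed T" "a \<in> pideal T b" shows "pideal T a \<subseteq> pideal T b"
proof
  fix x assume "x \<in> pideal T a"
  then obtain s where s: "x = a * s" "s \<in> T" "s \<noteq> 0" by (auto simp: pideal_mem)
  from assms(2) obtain t where t: "a = b * t" "t \<in> T" "t \<noteq> 0" by (auto simp: pideal_mem)
  have "x = b * (t * s)" using s t by (simp add: mult.assoc)
  moreover have "t * s \<in> T" using assms(1) s t by (auto simp: mclosed_def)
  ultimately show "x \<in> pideal T b" using s t by (auto simp: pideal_mem)
qed

lemma chain_le:
  assumes "\<forall>i. pideal T (b i) \<subseteq> pideal T (b (Suc i))" "m \<le> n"
  shows "pideal T (b m) \<subseteq> pideal T (b n)"
  using assms(2)
proof (induction n)
  case 0 then show ?case by simp
next
  case (Suc n)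
  then show ?case using assms(1) by (metis le_Suc_eq order_trans order_refl)
qed

lemma ACCP_I:
  assumes mc: "mclosed T"
    and H: "\<And>b. \<forall>i. b i \<in> T - {0} \<Longrightarrow> \<forall>i. b i \<in> pideal T (b (Suc i))
               \<Longrightarrow> \<exists>N. \<forall>n\<ge>N. b n \<in> pideal T (b N)"
  shows "ACCP T"
  unfolding ACCP_def
proof (intro allI impI)
  fix b :: "nat \<Rightarrow> 'a"
  assume a: "(\<forall>i. b i \<in> T - {0}) \<and> (\<forall>i. pideal T (b i) \<subseteq> pideal T (b (Suc i)))"
  have one: "1 \<in> T" using mc by (simp add: mclosed_def)
  have "\<forall>i. b i \<in> pideal T (b (Suc i))" using a pideal_self[OF one] by blast
  then obtain N where N: "\<forall>n\<ge>N. b n \<in> pideal T (b N)" using H a by blast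
  show "\<exists>N. \<forall>n\<ge>N. pideal T (b n) = pideal T (b N)"
  proof (intro exI allI impI)
    fix n assume "N \<le> n"
    then show "pideal T (b n) = pideal T (b N)"
      using pideal_trans[OF mc] N chain_le[of T b N n] a by blast
  qed
qed

lemma ACCP_D:
  assumes acc: "ACCP T" and mc: "mclosed T"
    and b: "\<forall>i. b i \<in> T - {0}" "\<forall>i. b i \<in> pideal T (b (Suc i))"
  shows "\<exists>N. \<forall>n\<ge>N. b n \<in> pideal T (b N)"
proof -
  have one: "1 \<in> T" using mc by (simp add: mclosed_def)
  have "\<forall>i. pideal T (b i) \<subseteq> pideal T (b (Suc i))" using b pideal_trans[OF mc] by blast
  then obtain N where "\<forall>n\<ge>N. pideal T (b n) = pideal T (b N)"
    using acc b unfolding ACCP_def by blast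
  then show ?thesis using pideal_self[OF one] by blast
qed

lemma chain_mem:
  assumes mc: "mclosed T" and b: "\<forall>i. b i \<in> pideal T (b (Suc i))" and "m \<le> n"
  shows "b m \<in> pideal T (b n)"
proof -
  have one: "1 \<in> T" using mc by (simp add: mclosed_def)
  have "\<forall>i. pideal T (b i) \<subseteq> pideal T (b (Suc i))" using b pideal_trans[OF mc] by blast
  then show ?thesis using chain_le[of T b m n] assms(3) pideal_self[OF one] by blast
qed

lemma semidomain_mclosed: "semidomain S \<Longrightarrow> mclosed S"
  by (auto simp: semidomain_def mclosed_def)

lemma sum_in:
  assumes "semidomain S" "finite A" "\<forall>i\<in>A. f i \<in> S"
  shows "sum f A \<in> S"
  using assms(2,3)
proof (induction A rule: finite_induct)
  case empty then show ?case using assms(1) by (simp add: semidomain_def)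
next
  case (insert x F) then show ?case using assms(1) by (simp add: semidomain_def)
qed

lemma poly_mult_in:
  assumes "semidomain S" "p \<in> poly_semidomain S" "q \<in> poly_semidomain S"
  shows "p * q \<in> poly_semidomain S"
  using assms unfolding poly_semidomain_def
  by (auto simp: coeff_mult intro!: sum_in) (auto simp: semidomain_def)

lemma poly_mclosed: "semidomain S \<Longrightarrow> mclosed (poly_semidomain S)"
  unfolding mclosed_def using poly_mult_in[of S]
  by (auto simp: poly_semidomain_def semidomain_def coeff_1)

lemma const_in: "semidomain S \<Longrightarrow> c \<in> S \<Longrightarrow> [:c:] \<in> poly_semidomain S"
  by (auto simp: poly_semidomain_def semidomain_def coeff_pCons split: nat.split)


lemma a_to_b:
  assumes sd: "semidomain S" and acc: "ACCP S"
  shows "ACCP (poly_semidomain S)"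
proof (rule ACCP_I[OF poly_mclosed[OF sd]])
  let ?P = "poly_semidomain S"
  have mcP: "mclosed ?P" by (rule poly_mclosed[OF sd])
  have mcS: "mclosed S" by (rule semidomain_mclosed[OF sd])
  have S0: "0 \<in> S" using sd by (simp add: semidomain_def)
  fix f assume fP: "\<forall>i. f i \<in> ?P - {0}" and ch: "\<forall>i. f i \<in> pideal ?P (f (Suc i))"
  have degle: "degree (f n) \<le> degree (f m)" if mn: "m \<le> n" for m n
  proof -
    obtain g where g: "f m = f n * g" "g \<noteq> 0"
      using chain_mem[OF mcP ch mn] by (auto simp: pideal_mem)
    then show ?thesis using fP by (simp add: degree_mult_eq)
  qed
  define d where "d = (LEAST d. \<exists>i. degree (f i) = d)"
  have "\<exists>i. degree (f i) = d" unfolding d_def by (rule LeastI_ex) auto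
  then obtain M where M: "degree (f M) = d" by blast
  have dmin: "d \<le> degree (f i)" for i unfolding d_def by (rule Least_le) auto
  have degeq: "degree (f n) = degree (f M)" if "M \<le> n" for n
    using degle[OF that] dmin[of n] M by simp
  define c where "c i = lead_coeff (f (M + i))" for i
  have lcS: "lead_coeff p \<in> S" if "p \<in> ?P" for p using that by (simp add: poly_semidomain_def)
  have cS: "\<forall>i. c i \<in> S - {0}" using fP lcS by (auto simp: c_def)
  have cch: "\<forall>i. c i \<in> pideal S (c (Suc i))"
  proof
    fix i
    obtain g where g: "f (M+i) = f (M + Suc i) * g" "g \<in> ?P" "g \<noteq> 0"
      using ch[rule_format, of "M+i"] by (auto simp: pideal_mem)
    then have "c i = c (Suc i) * lead_coeff g" by (simp add: c_def lead_coeff_mult)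
    then show "c i \<in> pideal S (c (Suc i))" using g lcS by (auto simp: pideal_mem)
  qed
  obtain N' where N': "\<forall>n\<ge>N'. c n \<in> pideal S (c N')" using ACCP_D[OF acc mcS cS cch] by blast
  show "\<exists>N. \<forall>n\<ge>N. f n \<in> pideal ?P (f N)"
  proof (intro exI allI impI)
    fix n assume n: "M + N' \<le> n"
    have "M \<le> n" using n by simp
    then obtain j where j1: "n = M + j" using le_Suc_ex by blast
    then have j: "n = M + j" "N' \<le> j" using n by auto
    obtain t where t: "c j = c N' * t" "t \<in> S" "t \<noteq> 0" using N' j by (auto simp: pideal_mem)
    obtain g where g: "f (M + N') = f n * g" "g \<in> ?P" "g \<noteq> 0"
      using chain_mem[OF mcP ch n] unfolding pideal_mem by blast
    have fn0: "f n \<noteq> 0" using fP by blast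
    have d1: "degree (f (M+N')) = degree (f n) + degree g"
      by (simp only: g(1) degree_mult_eq[OF fn0 g(3)])
    have d2: "degree (f (M+N')) = degree (f n)" using degeq[of "M+N'"] degeq[of n] n by simp
    from d1 d2 have dg: "degree g = 0" by linarith
    then have g0: "[:coeff g 0:] = g" by (rule degree_0_id)
    have e: "c N' = c j * coeff g 0" using g j dg by (simp add: c_def lead_coeff_mult)
    have "c j = c j * (coeff g 0 * t)" using t(1) unfolding e by (simp only: mult.assoc)
    moreover have "c j \<noteq> 0" using cS by blast
    ultimately have ut: "coeff g 0 * t = 1"
      by (metis mult.right_neutral mult_left_cancel)
    have gt: "g * [:t:] = 1" using ut by (subst g0[symmetric]) (simp add: mult.commute one_pCons)
    have "f (M+N') * [:t:] = f n * (g * [:t:])" using g by (simp add: mult.assoc)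
    also have "... = f n" using gt by simp
    finally have "f n = f (M + N') * [:t:]" by simp
    then show "f n \<in> pideal ?P (f (M + N'))"
      using t const_in[OF sd] unfolding pideal_mem by (intro exI[of _ "[:t:]"]) auto
  qed
qed

lemma b_to_a:
  assumes sd: "semidomain S" and acc: "ACCP (poly_semidomain S)"
  shows "ACCP S"
proof (rule ACCP_I[OF semidomain_mclosed[OF sd]])
  let ?P = "poly_semidomain S"
  fix c assume cS: "\<forall>i. c i \<in> S - {0}" and ch: "\<forall>i. c i \<in> pideal S (c (Suc i))"
  define f where "f i = [:c i:]" for i
  have fP: "\<forall>i. f i \<in> ?P - {0}" using cS const_in[OF sd] by (auto simp: f_def)
  have fch: "\<forall>i. f i \<in> pideal ?P (f (Suc i))"
  proof
    fix i
    obtain s where s: "c i = c (Suc i) * s" "s \<in> S" "s \<noteq> 0" using ch by (auto simp: pideal_mem)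
    then have "f i = f (Suc i) * [:s:]" by (simp add: f_def)
    then show "f i \<in> pideal ?P (f (Suc i))" using s const_in[OF sd]
      unfolding pideal_mem by (intro exI[of _ "[:s:]"]) auto
  qed
  obtain N where N: "\<forall>n\<ge>N. f n \<in> pideal ?P (f N)"
    using ACCP_D[OF acc poly_mclosed[OF sd] fP fch] by blast
  show "\<exists>N. \<forall>n\<ge>N. c n \<in> pideal S (c N)"
  proof (intro exI allI impI)
    fix n assume "N \<le> n"
    then obtain g where g: "f n = f N * g" "g \<in> ?P" by (meson N pideal_mem)
    then have e: "c n = c N * coeff g 0" by (metis coeff_mult_0 coeff_pCons_0 f_def)
    moreover have "coeff g 0 \<in> S" using g by (simp add: poly_semidomain_def)
    moreover have "coeff g 0 \<noteq> 0" using e cS by fastforce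
    ultimately show "c n \<in> pideal S (c N)" by (auto simp: pideal_mem)
  qed
qed


unbundle fps_syntax
notation fls_nth (infixl \<open>$$\<close> 75)

definition L :: "int \<Rightarrow> 'a::idom poly \<Rightarrow> 'a fls" where
  "L k p = fls_shift (-k) (fps_to_fls (fps_of_poly p))"

lemma L_nth: "L k p $$ n = (if n < k then 0 else coeff p (nat (n - k)))"
  by (simp add: L_def)

lemma L_mult: "L k p * L m q = L (k+m) (p*q)"
  by (simp add: L_def fls_times_both_shifted_simp fls_times_fps_to_fls fps_of_poly_mult add.commute)

lemma L_nz: assumes "p \<noteq> 0" shows "L k p \<noteq> 0"
proof -
  obtain i where "coeff p i \<noteq> 0" using assms by (metis leading_coeff_0_iff)
  then have "L k p $$ (int i + k) \<noteq> 0" by (simp add: L_nth)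
  then show ?thesis by (rule fls_nonzeroI)
qed

lemma L_in:
  assumes sd: "semidomain S" and p: "p \<in> poly_semidomain S"
  shows "L k p \<in> laurent_semidomain S"
proof -
  have S0: "0 \<in> S" using sd by (simp add: semidomain_def)
  have "{n. L k p $$ n \<noteq> 0} \<subseteq> (\<lambda>i. int i + k) ` {..degree p}"
  proof
    fix n assume "n \<in> {n. L k p $$ n \<noteq> 0}"
    then have a: "\<not> n < k" "coeff p (nat (n - k)) \<noteq> 0" by (auto simp: L_nth split: if_splits)
    then have "nat (n - k) \<le> degree p" by (simp add: le_degree)
    moreover have "n = int (nat (n - k)) + k" using a by simp
    ultimately show "n \<in> (\<lambda>i. int i + k) ` {..degree p}" by blast
  qed
  then have "finite {n. L k p $$ n \<noteq> 0}" by (rule finite_subset) simp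
  moreover have "\<forall>n. L k p $$ n \<in> S" using p S0 by (auto simp: L_nth poly_semidomain_def)
  ultimately show ?thesis by (simp add: laurent_semidomain_def)
qed

lemma L_sub: assumes "coeff p 0 \<noteq> 0" shows "fls_subdegree (L a p) = a"
  by (rule fls_subdegree_eqI) (use assms in \<open>auto simp: L_nth\<close>)

lemma L_inj:
  assumes "coeff p 0 \<noteq> 0" "coeff q 0 \<noteq> 0" "L a p = L b q"
  shows "a = b \<and> p = q"
proof -
  have ab: "a = b" using L_sub[OF assms(1), of a] L_sub[OF assms(2), of b] assms(3) by simp
  have "coeff p i = coeff q i" for i
    using arg_cong[OF assms(3), of "\<lambda>F. F $$ (int i + a)"] ab by (simp add: L_nth)
  then show ?thesis using ab by (simp add: poly_eqI)
qed

lemma L_rep: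
  assumes sd: "semidomain S" and F: "F \<in> laurent_semidomain S"
  shows "\<exists>p \<in> poly_semidomain S. F = L (fls_subdegree F) p \<and> (F \<noteq> 0 \<longrightarrow> coeff p 0 \<noteq> 0)"
proof -
  define k where "k = fls_subdegree F"
  define h where "h i = F $$ (int i + k)" for i
  have fin: "finite {n. F $$ n \<noteq> 0}" using F by (simp add: laurent_semidomain_def)
  have "{i. h i \<noteq> 0} = (\<lambda>i. int i + k) -` {n. F $$ n \<noteq> 0}" by (auto simp: h_def)
  moreover have "finite ((\<lambda>i. int i + k) -` {n. F $$ n \<noteq> 0})"
    by (rule finite_vimageI[OF fin]) (simp add: inj_def)
  ultimately have "finite {i. h i \<noteq> 0}" by simp
  then obtain B where B: "\<forall>i\<in>{i. h i \<noteq> 0}. i \<le> B" using finite_nat_set_iff_bounded_le by blast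
  have ch: "coeff (Abs_poly h) = h" by (rule coeff_Abs_poly[of B]) (use B in auto)
  define p where "p = Abs_poly h"
  have "F = L k p"
  proof (rule fls_eqI)
    fix n
    show "F $$ n = L k p $$ n"
      by (cases "n < k") (auto simp: L_nth p_def ch h_def k_def)
  qed
  moreover have "p \<in> poly_semidomain S" using F by (simp add: poly_semidomain_def p_def ch h_def laurent_semidomain_def)
  moreover have "F \<noteq> 0 \<longrightarrow> coeff p 0 \<noteq> 0" by (simp add: p_def ch h_def k_def)
  ultimately show ?thesis unfolding k_def by blast
qed

lemma LS_mclosed:
  assumes sd: "semidomain S" shows "mclosed (laurent_semidomain S)"
proof -
  have S01: "0 \<in> S" "1 \<in> S" using sd by (auto simp: semidomain_def)
  have "{n. (1::'a fls) $$ n \<noteq> 0} \<subseteq> {0}" by auto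
  then have "finite {n. (1::'a fls) $$ n \<noteq> 0}" by (rule finite_subset) simp
  then have one: "1 \<in> laurent_semidomain S" using S01 by (simp add: laurent_semidomain_def)
  have "F * G \<in> laurent_semidomain S" if FG: "F \<in> laurent_semidomain S" "G \<in> laurent_semidomain S" for F G
  proof -
    obtain p where p: "p \<in> poly_semidomain S" "F = L (fls_subdegree F) p" using L_rep[OF sd FG(1)] by blast
    obtain q where q: "q \<in> poly_semidomain S" "G = L (fls_subdegree G) q" using L_rep[OF sd FG(2)] by blast
    have "F * G = L (fls_subdegree F + fls_subdegree G) (p * q)" using p q L_mult by metis
    then show ?thesis using L_in[OF sd poly_mult_in[OF sd p(1) q(1)]] by simp
  qed
  then show ?thesis using one by (simp add: mclosed_def)
qed


lemma c_to_a:
  assumes sd: "semidomain S" and acc: "ACCP (laurent_semidomain S)"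
  shows "ACCP S"
proof (rule ACCP_I[OF semidomain_mclosed[OF sd]])
  let ?P = "laurent_semidomain S"
  have S0: "0 \<in> S" using sd by (simp add: semidomain_def)
  have cin: "fls_const a \<in> ?P" if "a \<in> S" for a
  proof -
    have "{n. fls_const a $$ n \<noteq> 0} \<subseteq> {0}" by auto
    then have "finite {n. fls_const a $$ n \<noteq> 0}" by (rule finite_subset) simp
    then show ?thesis using that S0 by (simp add: laurent_semidomain_def)
  qed
  have cnz: "fls_const a \<noteq> (0::'a fls)" if "a \<noteq> 0" for a
    using that fls_nonzeroI[of "fls_const a" 0] by simp
  fix c assume cS: "\<forall>i. c i \<in> S - {0}" and ch: "\<forall>i. c i \<in> pideal S (c (Suc i))"
  define f where "f i = fls_const (c i)" for i
  have fP: "\<forall>i. f i \<in> ?P - {0}" using cS cin cnz by (auto simp: f_def)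
  have fch: "\<forall>i. f i \<in> pideal ?P (f (Suc i))"
  proof
    fix i
    obtain s where s: "c i = c (Suc i) * s" "s \<in> S" "s \<noteq> 0" using ch by (auto simp: pideal_mem)
    then have "f i = f (Suc i) * fls_const s" by (simp add: f_def)
    then show "f i \<in> pideal ?P (f (Suc i))" using s cin cnz
      unfolding pideal_mem by (intro exI[of _ "fls_const s"]) auto
  qed
  obtain N where N: "\<forall>n\<ge>N. f n \<in> pideal ?P (f N)"
    using ACCP_D[OF acc LS_mclosed[OF sd] fP fch] by blast
  show "\<exists>N. \<forall>n\<ge>N. c n \<in> pideal S (c N)"
  proof (intro exI allI impI)
    fix n assume "N \<le> n"
    then obtain g where g: "f n = f N * g" "g \<in> ?P" by (meson N pideal_mem)
    have e: "c n = c N * g $$ 0"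
      using arg_cong[OF g(1), of "\<lambda>F. F $$ 0"] by (simp add: f_def)
    moreover have "g $$ 0 \<in> S" using g by (simp add: laurent_semidomain_def)
    moreover have "g $$ 0 \<noteq> 0" using e cS by fastforce
    ultimately show "c n \<in> pideal S (c N)" by (auto simp: pideal_mem)
  qed
qed

lemma b_to_c:
  assumes sd: "semidomain S" and acc: "ACCP (poly_semidomain S)"
  shows "ACCP (laurent_semidomain S)"
proof (rule ACCP_I[OF LS_mclosed[OF sd]])
  let ?LS = "laurent_semidomain S" and ?P = "poly_semidomain S"
  fix F assume FP: "\<forall>i. F i \<in> ?LS - {0}" and ch: "\<forall>i. F i \<in> pideal ?LS (F (Suc i))"
  define k where "k i = fls_subdegree (F i)" for i
  have "\<forall>i. \<exists>p. p \<in> ?P \<and> F i = L (k i) p \<and> coeff p 0 \<noteq> 0"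
    using L_rep[OF sd] FP unfolding k_def by blast
  then obtain p where p: "\<And>i. p i \<in> ?P" "\<And>i. F i = L (k i) (p i)" "\<And>i. coeff (p i) 0 \<noteq> 0"
    by metis
  have pnz: "p i \<noteq> 0" for i using p(3)[of i] by auto
  have pP: "\<forall>i. p i \<in> ?P - {0}" using p(1) pnz by blast
  have pch: "\<forall>i. p i \<in> pideal ?P (p (Suc i))"
  proof
    fix i
    obtain G where G: "F i = F (Suc i) * G" "G \<in> ?LS" "G \<noteq> 0" using ch by (auto simp: pideal_mem)
    obtain q where q: "q \<in> ?P" "G = L (fls_subdegree G) q" "coeff q 0 \<noteq> 0"
      using L_rep[OF sd G(2)] G(3) by blast
    have "L (k i) (p i) = L (k (Suc i) + fls_subdegree G) (p (Suc i) * q)"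
      using G(1) p(2)[of i] p(2)[of "Suc i"] q(2) L_mult by metis
    moreover have "coeff (p (Suc i) * q) 0 \<noteq> 0" using p(3) q(3) by (simp add: coeff_mult_0)
    ultimately have "p i = p (Suc i) * q" using L_inj p(3) by blast
    moreover have "q \<noteq> 0" using q(3) by auto
    ultimately show "p i \<in> pideal ?P (p (Suc i))" using q(1) unfolding pideal_mem by blast
  qed
  obtain N where N: "\<forall>n\<ge>N. p n \<in> pideal ?P (p N)"
    using ACCP_D[OF acc poly_mclosed[OF sd] pP pch] by blast
  show "\<exists>N. \<forall>n\<ge>N. F n \<in> pideal ?LS (F N)"
  proof (intro exI allI impI)
    fix n assume "N \<le> n"
    then obtain h where h: "p n = p N * h" "h \<in> ?P" "h \<noteq> 0" using N unfolding pideal_mem by blast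
    have "F n = F N * L (k n - k N) h"
      using p(2)[of n] p(2)[of N] h(1) L_mult[of "k N" "p N" "k n - k N" h] by simp
    moreover have "L (k n - k N) h \<in> ?LS" using L_in[OF sd h(2)] .
    moreover have "L (k n - k N) h \<noteq> 0" using L_nz[OF h(3)] .
    ultimately show "F n \<in> pideal ?LS (F N)" unfolding pideal_mem by blast
  qed
qed

theorem theorem3p3:
  fixes S :: "'a::idom set"
  assumes "semidomain S"
  shows "(ACCP S \<longleftrightarrow> ACCP (poly_semidomain S))
       \<and> (ACCP (poly_semidomain S) \<longleftrightarrow> ACCP (laurent_semidomain S))"
  using a_to_b[OF assms] b_to_a[OF assms] b_to_c[OF assms] c_to_a[OF assms] by blast

end
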